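(* Let $\mathbf{X}\subseteq\mathbb{R}_+^n$ be an interval and $\mathrm{IC}(\mathbf{a}_0,\dots,\mathbf{a}_{n-1})$ an interval circulant matrix. (a) $\mathbf{X}$ is possibly $\mathrm{IC}$-robust, i.e. there exists $x\in\mathbf{X}$ with $x\in\mathrm{Attr}(A)$ for all $A\in\mathrm{IC}(\mathbf{a}_0,\dots,\mathbf{a}_{n-1})$, if and only if there exists $x\in\mathbf{X}$ satisfying $\lambda(A^{(i)})(A^{(i)})^{n^2}\otimes x=(A^{(i)})^{n^2+1}\otimes x$ for all $i\in\{0,\dots,n-1\}$ with $A^{(i)}\ne0$. (b) If moreover $\hat A\in\mathrm{IC}(\mathbf{a}_0,\dots,\mathbf{a}_{n-1})$, then $\mathbf{X}$ is tolerance $\mathrm{IC}$-robust (for every $x\in\mathbf{X}$ there exists $A\in\mathrm{IC}(\mathbf{a}_0,\dots,\mathbf{a}_{n-1})$ with $x\in\mathrm{Attr}(A)$) if and only if $\mathrm{IC}(\mathbf{a}_0,\dots,\mathbf{a}_{n-1})$ is possibly $\mathbf{X}$-robust (there exists $A\in\mathrm{IC}(\mathbf{a}_0,\dots,\mathbf{a}_{n-1})$ with $x\in\mathrm{Attr}(A)$ for all $x\in\mathbf{X}$).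
   Context: Max algebra on $\mathbb{R}_+$: $\oplus=\max$, ordinary product, $A^t$ max-algebraic power; $\lambda(A)$ greatest max-algebraic eigenvalue (maximum cycle geometric mean); $\mathrm{Attr}(A)=\{x\in\mathbb{R}_+^n: A^{t+1}\otimes x=\lambda(A)A^t\otimes x\text{ for some }t\ge0\}$. An interval $\mathbf{X}=\prod_i\mathbf{X}_i$ has each $\mathbf{X}_i\subseteq\mathbb{R}_+$ nonempty of one of the forms $[\underline{x}_i,\overline{x}_i]$, $(\underline{x}_i,\overline{x}_i)$, $(\underline{x}_i,\overline{x}_i]$, $[\underline{x}_i,\overline{x}_i)$. $\mathrm{Circ}(a_0,\dots,a_{n-1})$ has entries $A_{i,j}=a_t$, $t\equiv j-i\pmod n$; $\mathrm{IC}(\mathbf{a}_0,\dots,\mathbf{a}_{n-1})$ is the set of all $\mathrm{Circ}(a_0,\dots,a_{n-1})$ with $a_t\in\mathbf{a}_t$, each $\mathbf{a}_t\subseteq\mathbb{R}_+$ a nonempty interval of one of the four forms with endpoints $\underline a_t\le\overline a_t$. $A^{(k)}=\mathrm{Circ}(\underline{a}_0,\dots,\underline{a}_{k-1},\overline{a}_k,\underline{a}_{k+1},\dots,\underline{a}_{n-1})$; $\underline a=\max_k\underline a_k$, $\hat A=\mathrm{Circ}(\hat a_0,\dots,\hat a_{n-1})$, $\hat a_i=\min\{\underline a,\overline a_i\}$. *)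

theory Defs
  imports Complex_Main
begin

text \<open>Max algebra over nonnegative reals on n x n matrices and n-vectors.
  Matrices are functions nat => nat => real, vectors nat => real; only
  indices below n are meaningful.\<close>

type_synonym mat = "nat \<Rightarrow> nat \<Rightarrow> real"
type_synonym vec = "nat \<Rightarrow> real"

definition mmult :: "nat \<Rightarrow> mat \<Rightarrow> mat \<Rightarrow> mat" where
  "mmult n A B = (\<lambda>i j. Max {A i k * B k j | k. k < n})"

definition mident :: mat where
  "mident = (\<lambda>i j. if i = j then 1 else 0)"

fun mpow :: "nat \<Rightarrow> mat \<Rightarrow> nat \<Rightarrow> mat" where
  "mpow n A 0 = mident"
| "mpow n A (Suc t) = mmult n A (mpow n A t)"

definition mvec :: "nat \<Rightarrow> mat \<Rightarrow> vec \<Rightarrow> vec" where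
  "mvec n A x = (\<lambda>i. Max {A i k * x k | k. k < n})"

text \<open>Maximum cycle geometric mean (greatest max-algebraic eigenvalue).\<close>
definition mlambda :: "nat \<Rightarrow> mat \<Rightarrow> real" where
  "mlambda n A = Max {root k (\<Prod>j<k. A (\<sigma> j) (\<sigma> (Suc j))) | k \<sigma>.
      1 \<le> k \<and> k \<le> n \<and> (\<forall>j\<le>k. \<sigma> j < n) \<and> \<sigma> k = \<sigma> 0}"

definition veq :: "nat \<Rightarrow> vec \<Rightarrow> vec \<Rightarrow> bool" where
  "veq n x y \<longleftrightarrow> (\<forall>i<n. x i = y i)"

definition Attr :: "nat \<Rightarrow> mat \<Rightarrow> vec set" where
  "Attr n A = {x. (\<forall>i<n. 0 \<le> x i) \<and>
     (\<exists>t. veq n (mvec n (mpow n A (Suc t)) x) (\<lambda>i. mlambda n A * mvec n (mpow n A t) x i))}"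

datatype ikind = Closed | Open | LOpen | ROpen

fun ivl :: "ikind \<Rightarrow> real \<Rightarrow> real \<Rightarrow> real set" where
  "ivl Closed l u = {l..u}"
| "ivl Open l u = {l<..<u}"
| "ivl LOpen l u = {l<..u}"
| "ivl ROpen l u = {l..<u}"

definition valid_ivl :: "ikind \<Rightarrow> real \<Rightarrow> real \<Rightarrow> bool" where
  "valid_ivl k l u \<longleftrightarrow> 0 \<le> l \<and> l \<le> u \<and> ivl k l u \<noteq> {}"

definition ivec :: "nat \<Rightarrow> (nat \<Rightarrow> ikind) \<Rightarrow> vec \<Rightarrow> vec \<Rightarrow> vec set" where
  "ivec n k l u = {x. \<forall>i<n. x i \<in> ivl (k i) (l i) (u i)}"

definition Circ :: "nat \<Rightarrow> (nat \<Rightarrow> real) \<Rightarrow> mat" where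
  "Circ n a = (\<lambda>i j. a ((j + n - i) mod n))"

definition IC :: "nat \<Rightarrow> (nat \<Rightarrow> ikind) \<Rightarrow> (nat \<Rightarrow> real) \<Rightarrow> (nat \<Rightarrow> real) \<Rightarrow> mat set" where
  "IC n k l u = {Circ n a | a. \<forall>t<n. a t \<in> ivl (k t) (l t) (u t)}"

definition Ak :: "nat \<Rightarrow> (nat \<Rightarrow> real) \<Rightarrow> (nat \<Rightarrow> real) \<Rightarrow> nat \<Rightarrow> mat" where
  "Ak n l u k = Circ n (\<lambda>t. if t = k then u t else l t)"

definition Ahat :: "nat \<Rightarrow> (nat \<Rightarrow> real) \<Rightarrow> (nat \<Rightarrow> real) \<Rightarrow> mat" where
  "Ahat n l u = Circ n (\<lambda>t. min (Max {l s | s. s < n}) (u t))"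

definition mzero :: "nat \<Rightarrow> mat \<Rightarrow> bool" where
  "mzero n A \<longleftrightarrow> (\<forall>i<n. \<forall>j<n. A i j = 0)"

end

theory Submission
  imports Defs
begin


lemma Max_set_eq: "{f k | k. k < n} = f ` {..<n}" by auto

lemma Max_fin_ge: "k < n \<Longrightarrow> f k \<le> Max {f k | k. k < (n::nat)}"
  unfolding Max_set_eq by (rule Max_ge) auto

lemma Max_fin_in: "0 < n \<Longrightarrow> \<exists>k<n. Max {f k | k. k < (n::nat)} = f k"
proof -
  assume "0 < n"
  then have "Max (f ` {..<n}) \<in> f ` {..<n}" by (intro Max_in) auto
  then show ?thesis unfolding Max_set_eq by auto
qed

lemma Max_fin_le: "0 < n \<Longrightarrow> (\<And>k. k < n \<Longrightarrow> f k \<le> (c::real)) \<Longrightarrow> Max {f k | k. k < (n::nat)} \<le> c"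
  unfolding Max_set_eq by (subst Max_le_iff) auto

lemma Circ_shift: "i < n \<Longrightarrow> d < n \<Longrightarrow> Circ n a i ((i + d) mod n) = a d"
proof -
  assume h: "i < n" "d < n"
  have "((i + d) mod n + n - i) mod n = d"
  proof (cases "i + d < n")
    case True then show ?thesis using h by simp
  next
    case False
    then have "(i + d) mod n = i + d - n" using h by (simp add: le_mod_geq)
    then show ?thesis using h False by simp
  qed
  then show ?thesis unfolding Circ_def by simp
qed

lemma Circ_step: "i < (n::nat) \<Longrightarrow> k < n \<Longrightarrow> (i + (k + n - i) mod n) mod n = k"
proof -
  assume h: "i < n" "k < n"
  have "(i + (k + n - i) mod n) mod n = (i + (k+n-i)) mod n" using mod_add_right_eq[of i "k+n-i" n] by simp
  also have "i + (k+n-i) = k + n" using h by simp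
  finally show ?thesis using h by simp
qed

lemma Circ_nonneg: "0 < n \<Longrightarrow> \<forall>t<n. 0 \<le> a t \<Longrightarrow> 0 \<le> Circ n a i j"
  unfolding Circ_def by simp

lemma mpow_nonneg: "0 < n \<Longrightarrow> (\<forall>i j. 0 \<le> A i j) \<Longrightarrow> 0 \<le> mpow n A k i j"
proof (induction k arbitrary: i j)
  case 0 then show ?case by (simp add: mident_def)
next
  case (Suc k)
  have "0 \<le> A i 0 * mpow n A k 0 j" using Suc by simp
  also have "\<dots> \<le> mmult n A (mpow n A k) i j"
    unfolding mmult_def using Max_fin_ge[of 0 n "\<lambda>l. A i l * mpow n A k l j"] Suc by simp
  finally show ?case by simp
qed

lemma Circ_nonneg_all: "0 < n \<Longrightarrow> \<forall>t<n. 0 \<le> a t \<Longrightarrow> \<forall>i j. 0 \<le> Circ n a i j"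
  unfolding Circ_def by simp

lemma walk_le:
  assumes n: "0 < n" and a: "\<forall>t<n. 0 \<le> a t"
  shows "length ds = k \<Longrightarrow> set ds \<subseteq> {..<n} \<Longrightarrow> i < n \<Longrightarrow>
    prod_list (map a ds) \<le> mpow n (Circ n a) k i ((i + sum_list ds) mod n)"
proof (induction ds arbitrary: k i)
  case Nil then show ?case by (simp add: mident_def)
next
  case (Cons d ds)
  then obtain k' where k: "k = Suc k'" by (cases k) auto
  define l where "l = (i + d) mod n"
  have l: "l < n" using n l_def by simp
  have d: "d < n" using Cons by simp
  have C: "Circ n a i l = a d" using Circ_shift[OF Cons(4) d] l_def by simp
  have IH: "prod_list (map a ds) \<le> mpow n (Circ n a) k' l ((l + sum_list ds) mod n)"
    using Cons k l by simp
  have e: "(l + sum_list ds) mod n = (i + sum_list (d # ds)) mod n"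
    unfolding l_def by (simp add: mod_add_left_eq add.assoc)
  have "prod_list (map a (d # ds)) = a d * prod_list (map a ds)" by simp
  also have "\<dots> \<le> Circ n a i l * mpow n (Circ n a) k' l ((i + sum_list (d # ds)) mod n)"
    using IH C e a d by (simp add: mult_left_mono)
  also have "\<dots> \<le> mpow n (Circ n a) k i ((i + sum_list (d # ds)) mod n)"
    unfolding k using Max_fin_ge[OF l, of "\<lambda>l. Circ n a i l * mpow n (Circ n a) k' l ((i + sum_list (d # ds)) mod n)"]
    by (simp add: mmult_def)
  finally show ?case .
qed

lemma walk_att:
  assumes n: "0 < n" and a: "\<forall>t<n. 0 \<le> a t"
  shows "i < n \<Longrightarrow> j < n \<Longrightarrow> mpow n (Circ n a) k i j = 0 \<or>
    (\<exists>ds. length ds = k \<and> set ds \<subseteq> {..<n} \<and> (i + sum_list ds) mod n = j \<and>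
       mpow n (Circ n a) k i j = prod_list (map a ds))"
proof (induction k arbitrary: i)
  case 0 then show ?case by (auto simp: mident_def)
next
  case (Suc k)
  obtain l where l: "l < n" and lm: "mpow n (Circ n a) (Suc k) i j = Circ n a i l * mpow n (Circ n a) k l j"
    using Max_fin_in[OF n, of "\<lambda>l. Circ n a i l * mpow n (Circ n a) k l j"] by (auto simp: mmult_def)
  from Suc.IH[OF l Suc.prems(2)] show ?case
  proof
    assume "mpow n (Circ n a) k l j = 0" then show ?thesis using lm by simp
  next
    assume "\<exists>ds. length ds = k \<and> set ds \<subseteq> {..<n} \<and> (l + sum_list ds) mod n = j \<and>
       mpow n (Circ n a) k l j = prod_list (map a ds)"
    then obtain ds where ds: "length ds = k" "set ds \<subseteq> {..<n}" "(l + sum_list ds) mod n = j"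
      "mpow n (Circ n a) k l j = prod_list (map a ds)" by blast
    define d where "d = (l + n - i) mod n"
    have d: "d < n" using n d_def by simp
    have C: "Circ n a i l = a d" unfolding Circ_def d_def ..
    have il: "(i + d) mod n = l" unfolding d_def using Circ_step[OF Suc.prems(1) l] .
    have "(i + sum_list (d # ds)) mod n = ((i + d) + sum_list ds) mod n" by (simp add: add.assoc)
    also have "\<dots> = ((i + d) mod n + sum_list ds) mod n" by (simp add: mod_add_left_eq)
    finally have e: "(i + sum_list (d # ds)) mod n = j" using il ds(3) by simp
    show ?thesis
      apply (rule disjI2, rule exI[of _ "d # ds"])
      using ds d e lm C by simp
  qed
qed

definition Mx :: "nat \<Rightarrow> (nat \<Rightarrow> real) \<Rightarrow> real" where
  "Mx n a = Max {a t | t. t < n}"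

definition V :: "nat \<Rightarrow> (nat \<Rightarrow> real) \<Rightarrow> vec \<Rightarrow> nat \<Rightarrow> nat \<Rightarrow> real" where
  "V n a x k e = mvec n (mpow n (Circ n a) k) x e"

lemma Mx_ge: "t < n \<Longrightarrow> a t \<le> Mx n a"
  unfolding Mx_def by (rule Max_fin_ge)

lemma Mx_in: "0 < n \<Longrightarrow> \<exists>t<n. a t = Mx n a"
  unfolding Mx_def using Max_fin_in[of n a] by metis

lemma Mx_nonneg: "0 < n \<Longrightarrow> \<forall>t<n. 0 \<le> a t \<Longrightarrow> 0 \<le> Mx n a"
  using Mx_ge[of 0 n a] by force

lemma prod_nonneg: "\<forall>t<n. 0 \<le> (a t :: real) \<Longrightarrow> set ds \<subseteq> {..<n} \<Longrightarrow> 0 \<le> prod_list (map a ds)"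
  by (induction ds) auto

lemma prod_le_pow: "\<forall>t<n. 0 \<le> (a t :: real) \<Longrightarrow> set ds \<subseteq> {..<n} \<Longrightarrow> prod_list (map a ds) \<le> Mx n a ^ length ds"
proof (induction ds)
  case Nil then show ?case by simp
next
  case (Cons d ds)
  then have "a d \<le> Mx n a" "0 \<le> a d" "0 \<le> prod_list (map a ds)" using Mx_ge prod_nonneg by auto
  then have "0 \<le> Mx n a" by linarith
  then show ?case using Cons \<open>a d \<le> Mx n a\<close> \<open>0 \<le> prod_list (map a ds)\<close> by (simp add: mult_mono)
qed

lemma prod_scale: "\<forall>t<n. 0 \<le> (a t :: real) \<Longrightarrow> \<forall>t<n. a t \<le> c * b t \<Longrightarrow> set ds \<subseteq> {..<n} \<Longrightarrow>
   prod_list (map a ds) \<le> c ^ length ds * prod_list (map b ds)"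
proof (induction ds)
  case Nil then show ?case by simp
next
  case (Cons d ds)
  then have "a d \<le> c * b d" "0 \<le> a d" "0 \<le> prod_list (map a ds)" using prod_nonneg by auto
  then have "a d * prod_list (map a ds) \<le> (c * b d) * (c ^ length ds * prod_list (map b ds))"
    using Cons by (intro mult_mono) (auto intro: order_trans)
  then show ?case by (simp add: algebra_simps)
qed

context
  fixes n :: nat and a :: "nat \<Rightarrow> real" and x :: vec
  assumes n: "0 < n" and a: "\<forall>t<n. 0 \<le> a t" and x: "\<forall>i<n. 0 \<le> x i"
begin

lemma V_nonneg: "0 \<le> V n a x k e"
proof -
  have "0 \<le> mpow n (Circ n a) k e 0 * x 0"
    using mpow_nonneg[OF n Circ_nonneg_all[OF n a]] x n by simp
  also have "\<dots> \<le> V n a x k e" unfolding V_def mvec_def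
    using Max_fin_ge[OF n, of "\<lambda>j. mpow n (Circ n a) k e j * x j"] by simp
  finally show ?thesis .
qed

lemma V1: "length ds = k \<Longrightarrow> set ds \<subseteq> {..<n} \<Longrightarrow> e < n \<Longrightarrow>
   prod_list (map a ds) * x ((e + sum_list ds) mod n) \<le> V n a x k e"
proof -
  assume h: "length ds = k" "set ds \<subseteq> {..<n}" "e < n"
  define j where "j = (e + sum_list ds) mod n"
  have j: "j < n" using n j_def by simp
  have "prod_list (map a ds) * x j \<le> mpow n (Circ n a) k e j * x j"
    using walk_le[OF n a h] x j j_def by (simp add: mult_right_mono)
  also have "\<dots> \<le> V n a x k e" unfolding V_def mvec_def
    using Max_fin_ge[OF j, of "\<lambda>j. mpow n (Circ n a) k e j * x j"] by simp
  finally show ?thesis unfolding j_def .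
qed

lemma V2: "e < n \<Longrightarrow> V n a x k e = 0 \<or> (\<exists>ds. length ds = k \<and> set ds \<subseteq> {..<n} \<and>
   V n a x k e = prod_list (map a ds) * x ((e + sum_list ds) mod n))"
proof -
  assume e: "e < n"
  obtain j where j: "j < n" and vj: "V n a x k e = mpow n (Circ n a) k e j * x j"
    using Max_fin_in[OF n, of "\<lambda>j. mpow n (Circ n a) k e j * x j"] unfolding V_def mvec_def by auto
  from walk_att[OF n a e j, of k] show ?thesis
    using vj by auto
qed

lemma concat: "length ds = k \<Longrightarrow> set ds \<subseteq> {..<n} \<Longrightarrow> e < n \<Longrightarrow>
   prod_list (map a ds) * V n a x j ((e + sum_list ds) mod n) \<le> V n a x (k + j) e"
proof -
  assume h: "length ds = k" "set ds \<subseteq> {..<n}" "e < n"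
  define f where "f = (e + sum_list ds) mod n"
  have f: "f < n" using n f_def by simp
  from V2[OF f, of j] show ?thesis
  proof
    assume "V n a x j f = 0" then show ?thesis using V_nonneg f_def by simp
  next
    assume "\<exists>ds2. length ds2 = j \<and> set ds2 \<subseteq> {..<n} \<and>
       V n a x j f = prod_list (map a ds2) * x ((f + sum_list ds2) mod n)"
    then obtain ds2 where d2: "length ds2 = j" "set ds2 \<subseteq> {..<n}"
       "V n a x j f = prod_list (map a ds2) * x ((f + sum_list ds2) mod n)" by blast
    have "(f + sum_list ds2) mod n = (e + sum_list (ds @ ds2)) mod n"
      unfolding f_def by (simp add: mod_add_left_eq add.assoc)
    then have "prod_list (map a ds) * V n a x j f = prod_list (map a (ds @ ds2)) * x ((e + sum_list (ds @ ds2)) mod n)"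
      using d2 by simp
    also have "\<dots> \<le> V n a x (k + j) e" using V1[of "ds @ ds2" "k + j" e] h d2 by simp
    finally show ?thesis unfolding f_def .
  qed
qed

lemma step_ge: "d < n \<Longrightarrow> e < n \<Longrightarrow> a d * V n a x j ((e + d) mod n) \<le> V n a x (Suc j) e"
  using concat[of "[d]" 1 e j] by simp

lemma step_le: "e < n \<Longrightarrow> V n a x (Suc j) e = 0 \<or> (\<exists>d<n. V n a x (Suc j) e \<le> a d * V n a x j ((e + d) mod n))"
proof -
  assume e: "e < n"
  from V2[OF e, of "Suc j"] show ?thesis
  proof
    assume "\<exists>ds. length ds = Suc j \<and> set ds \<subseteq> {..<n} \<and>
       V n a x (Suc j) e = prod_list (map a ds) * x ((e + sum_list ds) mod n)"
    then obtain d ds where h: "length ds = j" "d < n" "set ds \<subseteq> {..<n}"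
      "V n a x (Suc j) e = a d * (prod_list (map a ds) * x ((e + (d + sum_list ds)) mod n))"
      by (auto simp: length_Suc_conv)
    have "(e + (d + sum_list ds)) mod n = ((e + d) mod n + sum_list ds) mod n"
      by (simp add: mod_add_left_eq add.assoc)
    then have "prod_list (map a ds) * x ((e + (d + sum_list ds)) mod n) \<le> V n a x j ((e + d) mod n)"
      using V1[OF h(1) h(3), of "(e + d) mod n"] n by simp
    then have "V n a x (Suc j) e \<le> a d * V n a x j ((e + d) mod n)"
      using h a by (simp add: mult_left_mono)
    then show ?thesis using h by blast
  qed simp
qed

end


lemma pigeon: "set ds \<subseteq> {..<n} \<Longrightarrow> n * (n - 1) < length ds \<Longrightarrow> \<exists>t<n. n \<le> count_list ds t"
proof (rule ccontr)
  assume h: "set ds \<subseteq> {..<n}" "n * (n - 1) < length ds" "\<not> (\<exists>t<n. n \<le> count_list ds t)"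
  then have "\<forall>t\<in>{..<n}. count_list ds t \<le> n - 1" by auto
  then have "sum (count_list ds) {..<n} \<le> card {..<n} * (n - 1)"
    using sum_bounded_above[of "{..<n}" "count_list ds" "n - 1"] by auto
  moreover have "sum (count_list ds) {..<n} = length ds" using h(1) by (rule sum_count_set) simp
  ultimately show False using h(2) by simp
qed

lemma filt_prod: "prod_list (map (a::nat\<Rightarrow>real) ds) = a t ^ count_list ds t * prod_list (map a (filter (\<lambda>y. y \<noteq> t) ds))"
  by (induction ds) (auto simp: algebra_simps)

lemma filt_sum: "sum_list ds = count_list ds t * t + sum_list (filter (\<lambda>y. y \<noteq> (t::nat)) ds)"
  by (induction ds) (auto simp: algebra_simps)

lemma filt_len: "length ds = count_list ds t + length (filter (\<lambda>y. y \<noteq> t) ds)"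
  by (induction ds) auto

definition Q :: "nat \<Rightarrow> (nat \<Rightarrow> real) \<Rightarrow> vec \<Rightarrow> bool" where
  "Q n a x \<longleftrightarrow> (\<forall>k\<ge>n*n. \<forall>e<n. Mx n a ^ k * x e \<le> V n a x k e)"

context
  fixes n :: nat and a :: "nat \<Rightarrow> real" and x :: vec
  assumes n: "0 < n" and a: "\<forall>t<n. 0 \<le> a t" and x: "\<forall>i<n. 0 \<le> x i"
begin

lemma Mx0: "0 \<le> Mx n a" using Mx_nonneg[OF n a] .

lemma F1ge: "e < n \<Longrightarrow> Mx n a ^ n * V n a x k e \<le> V n a x (k + n) e"
proof -
  assume e: "e < n"
  obtain t0 where t0: "t0 < n" "a t0 = Mx n a" using Mx_in[OF n] by blast
  from V2[OF n a x e, of k] show ?thesis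
  proof
    assume "V n a x k e = 0" then show ?thesis using V_nonneg[OF n a x] by simp
  next
    assume "\<exists>ds. length ds = k \<and> set ds \<subseteq> {..<n} \<and> V n a x k e = prod_list (map a ds) * x ((e + sum_list ds) mod n)"
    then obtain ds where ds: "length ds = k" "set ds \<subseteq> {..<n}" "V n a x k e = prod_list (map a ds) * x ((e + sum_list ds) mod n)" by blast
    have l: "length (replicate n t0 @ ds) = k + n" using ds by simp
    have s: "set (replicate n t0 @ ds) \<subseteq> {..<n}" using ds t0 by auto
    have eq: "e + sum_list (replicate n t0 @ ds) = (e + sum_list ds) + n * t0" by (simp add: sum_list_replicate)
    have m: "(e + sum_list (replicate n t0 @ ds)) mod n = (e + sum_list ds) mod n"
      unfolding eq mod_mult_self2 ..
    have "Mx n a ^ n * V n a x k e = prod_list (map a (replicate n t0 @ ds)) * x ((e + sum_list (replicate n t0 @ ds)) mod n)"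
      using ds(3) t0(2) m by (simp add: prod_list_replicate)
    also have "\<dots> \<le> V n a x (k + n) e" using V1[OF n a x l s e] .
    finally show ?thesis .
  qed
qed

lemma F1le: "n * n \<le> k \<Longrightarrow> e < n \<Longrightarrow> V n a x (k + n) e \<le> Mx n a ^ n * V n a x k e"
proof -
  assume k: "n * n \<le> k" and e: "e < n"
  from V2[OF n a x e, of "k + n"] show ?thesis
  proof
    assume "V n a x (k + n) e = 0" then show ?thesis using V_nonneg[OF n a x] Mx0 by simp
  next
    assume "\<exists>ds. length ds = k + n \<and> set ds \<subseteq> {..<n} \<and> V n a x (k + n) e = prod_list (map a ds) * x ((e + sum_list ds) mod n)"
    then obtain ds where ds: "length ds = k + n" "set ds \<subseteq> {..<n}" "V n a x (k + n) e = prod_list (map a ds) * x ((e + sum_list ds) mod n)" by blast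
    have "n * (n - 1) \<le> n * n" by simp
    then have "n * (n - 1) < length ds" using ds(1) k n by linarith
    then obtain t where t: "t < n" "n \<le> count_list ds t" using pigeon[OF ds(2)] by blast
    define c where "c = count_list ds t"
    define ds' where "ds' = filter (\<lambda>y. y \<noteq> t) ds @ replicate (c - n) t"
    have l: "length ds' = k" using filt_len[of ds t] ds t unfolding ds'_def c_def by simp
    have s: "set ds' \<subseteq> {..<n}" using ds t unfolding ds'_def by auto
    have cn: "n + (c - n) = c" using t c_def by simp
    have "a t ^ (n + (c - n)) = a t ^ n * a t ^ (c - n)" by (rule power_add)
    then have pc: "a t ^ c = a t ^ n * a t ^ (c - n)" unfolding cn .
    have "(n + (c - n)) * t = n * t + (c - n) * t" by (rule add_mult_distrib)
    then have sc: "c * t = n * t + (c - n) * t" unfolding cn .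
    define PF where "PF = prod_list (map a (filter (\<lambda>y. y \<noteq> t) ds))"
    define SF where "SF = sum_list (filter (\<lambda>y. y \<noteq> t) ds)"
    have pd': "prod_list (map a ds') = PF * a t ^ (c - n)" unfolding ds'_def PF_def by (simp add: prod_list_replicate)
    have sd': "sum_list ds' = SF + (c - n) * t" unfolding ds'_def SF_def by (simp add: sum_list_replicate)
    have "prod_list (map a ds) = a t ^ c * PF" unfolding PF_def c_def by (rule filt_prod)
    also have "\<dots> = a t ^ n * (PF * a t ^ (c - n))" unfolding pc by (simp only: mult_ac)
    finally have p: "prod_list (map a ds) = a t ^ n * prod_list (map a ds')" unfolding pd' .
    have "sum_list ds = c * t + SF" unfolding SF_def c_def by (rule filt_sum)
    also have "\<dots> = n * t + (SF + (c - n) * t)" unfolding sc by (simp only: add_ac)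
    finally have sm: "sum_list ds = n * t + sum_list ds'" unfolding sd' .
    have eq2: "e + sum_list ds = (e + sum_list ds') + n * t" unfolding sm by simp
    have m: "(e + sum_list ds) mod n = (e + sum_list ds') mod n"
      unfolding eq2 mod_mult_self2 ..
    have pn: "0 \<le> prod_list (map a ds') * x ((e + sum_list ds') mod n)"
      using prod_nonneg[OF a s] x n by simp
    have at: "a t ^ n \<le> Mx n a ^ n" using a t Mx_ge[OF t(1)] by (simp add: power_mono)
    have "V n a x (k + n) e = a t ^ n * (prod_list (map a ds') * x ((e + sum_list ds') mod n))"
      using ds p m by simp
    also have "\<dots> \<le> Mx n a ^ n * (prod_list (map a ds') * x ((e + sum_list ds') mod n))"
      using at pn by (simp add: mult_right_mono)
    also have "\<dots> \<le> Mx n a ^ n * V n a x k e"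
      using V1[OF n a x l s e] Mx0 by (simp add: mult_left_mono)
    finally show ?thesis .
  qed
qed

lemma Fiter: "n * n \<le> k \<Longrightarrow> e < n \<Longrightarrow> V n a x (k + m * n) e = Mx n a ^ (m * n) * V n a x k e"
proof (induction m)
  case 0 then show ?case by simp
next
  case (Suc m)
  have "V n a x (k + Suc m * n) e = V n a x ((k + m * n) + n) e" by (simp add: algebra_simps)
  also have "\<dots> = Mx n a ^ n * V n a x (k + m * n) e"
    using F1le[of "k + m*n" e] F1ge[of e "k + m*n"] Suc by simp
  also have "\<dots> = Mx n a ^ (Suc m * n) * V n a x k e" using Suc by (simp add: power_add algebra_simps)
  finally show ?case .
qed

lemma F2: "e < n \<Longrightarrow> Mx n a ^ (m * n) * x e \<le> V n a x (m * n) e"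
proof -
  assume e: "e < n"
  obtain t0 where t0: "t0 < n" "a t0 = Mx n a" using Mx_in[OF n] by blast
  have l: "length (replicate (m*n) t0) = m * n" by simp
  have s: "set (replicate (m*n) t0) \<subseteq> {..<n}" using t0 by auto
  have eq: "sum_list (replicate (m*n) t0) = n * (m * t0)" by (simp add: sum_list_replicate)
  have mm: "(e + sum_list (replicate (m*n) t0)) mod n = e" unfolding eq mod_mult_self2 using e by simp
  show ?thesis using V1[OF n a x l s e] mm t0 by (simp add: prod_list_replicate)
qed

lemma F3: "(\<forall>f<n. Mx n a ^ j * x f \<le> V n a x j f) \<Longrightarrow> e < n \<Longrightarrow> Mx n a ^ j * V n a x k e \<le> V n a x (k + j) e"
proof -
  assume h: "\<forall>f<n. Mx n a ^ j * x f \<le> V n a x j f" and e: "e < n"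
  from V2[OF n a x e, of k] show ?thesis
  proof
    assume "V n a x k e = 0" then show ?thesis using V_nonneg[OF n a x] by simp
  next
    assume "\<exists>ds. length ds = k \<and> set ds \<subseteq> {..<n} \<and> V n a x k e = prod_list (map a ds) * x ((e + sum_list ds) mod n)"
    then obtain ds where ds: "length ds = k" "set ds \<subseteq> {..<n}" "V n a x k e = prod_list (map a ds) * x ((e + sum_list ds) mod n)" by blast
    have f: "(e + sum_list ds) mod n < n" using n by simp
    have "Mx n a ^ j * V n a x k e = prod_list (map a ds) * (Mx n a ^ j * x ((e + sum_list ds) mod n))"
      using ds by (simp add: algebra_simps)
    also have "\<dots> \<le> prod_list (map a ds) * V n a x j ((e + sum_list ds) mod n)"
      using h f prod_nonneg[OF a ds(2)] by (simp add: mult_left_mono)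
    also have "\<dots> \<le> V n a x (k + j) e" using concat[OF n a x ds(1,2) e] .
    finally show ?thesis .
  qed
qed

lemma Vzero: "Mx n a = 0 \<Longrightarrow> e < n \<Longrightarrow> V n a x (Suc k) e = 0"
proof -
  assume M: "Mx n a = 0" and e: "e < n"
  from V2[OF n a x e, of "Suc k"] show ?thesis
  proof
    assume "\<exists>ds. length ds = Suc k \<and> set ds \<subseteq> {..<n} \<and> V n a x (Suc k) e = prod_list (map a ds) * x ((e + sum_list ds) mod n)"
    then obtain ds where ds: "length ds = Suc k" "set ds \<subseteq> {..<n}" "V n a x (Suc k) e = prod_list (map a ds) * x ((e + sum_list ds) mod n)" by blast
    have "prod_list (map a ds) = 0" using prod_le_pow[OF a ds(2)] prod_nonneg[OF a ds(2)] M ds(1) by simp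
    then show ?thesis using ds by simp
  qed
qed

lemma prop1: "\<forall>f<n. V n a x (Suc t) f = Mx n a * V n a x t f \<Longrightarrow> e < n \<Longrightarrow> V n a x (Suc (Suc t)) e = Mx n a * V n a x (Suc t) e"
proof -
  assume h: "\<forall>f<n. V n a x (Suc t) f = Mx n a * V n a x t f" and e: "e < n"
  have le: "V n a x (Suc (Suc t)) e \<le> Mx n a * V n a x (Suc t) e"
  proof -
    from step_le[OF n a x e, of "Suc t"] show ?thesis
    proof
      assume "V n a x (Suc (Suc t)) e = 0" then show ?thesis using V_nonneg[OF n a x] Mx0 by simp
    next
      assume "\<exists>d<n. V n a x (Suc (Suc t)) e \<le> a d * V n a x (Suc t) ((e + d) mod n)"
      then obtain d where d: "d < n" "V n a x (Suc (Suc t)) e \<le> a d * V n a x (Suc t) ((e + d) mod n)" by blast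
      have "a d * V n a x (Suc t) ((e + d) mod n) = Mx n a * (a d * V n a x t ((e + d) mod n))"
        using h n by simp
      also have "\<dots> \<le> Mx n a * V n a x (Suc t) e" using step_ge[OF n a x d(1) e] Mx0 by (simp add: mult_left_mono)
      finally show ?thesis using d by simp
    qed
  qed
  have ge: "Mx n a * V n a x (Suc t) e \<le> V n a x (Suc (Suc t)) e"
  proof -
    from step_le[OF n a x e, of t] show ?thesis
    proof
      assume "V n a x (Suc t) e = 0" then show ?thesis using V_nonneg[OF n a x] by simp
    next
      assume "\<exists>d<n. V n a x (Suc t) e \<le> a d * V n a x t ((e + d) mod n)"
      then obtain d where d: "d < n" "V n a x (Suc t) e \<le> a d * V n a x t ((e + d) mod n)" by blast
      have "Mx n a * V n a x (Suc t) e \<le> Mx n a * (a d * V n a x t ((e + d) mod n))"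
        using d Mx0 by (simp add: mult_left_mono)
      also have "\<dots> = a d * V n a x (Suc t) ((e + d) mod n)" using h n by simp
      also have "\<dots> \<le> V n a x (Suc (Suc t)) e" using step_ge[OF n a x d(1) e] .
      finally show ?thesis .
    qed
  qed
  show ?thesis using le ge by simp
qed

lemma propj: "\<forall>f<n. V n a x (Suc t) f = Mx n a * V n a x t f \<Longrightarrow> \<forall>e<n. V n a x (t + j) e = Mx n a ^ j * V n a x t e"
proof (induction j)
  case 0 then show ?case by simp
next
  case (Suc j)
  have "\<forall>f<n. V n a x (Suc (t + j)) f = Mx n a * V n a x (t + j) f"
  proof (induction j)
    case 0 then show ?case using Suc.prems by simp
  next
    case (Suc j) then show ?case using prop1[of "t + j"] by simp
  qed
  then show ?case using Suc by simp
qed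

end


context
  fixes n :: nat and a :: "nat \<Rightarrow> real" and x :: vec
  assumes n: "0 < n" and a: "\<forall>t<n. 0 \<le> a t" and x: "\<forall>i<n. 0 \<le> x i"
begin

lemma Q_cond: "Q n a x \<Longrightarrow> e < n \<Longrightarrow> V n a x (Suc (n*n)) e = Mx n a * V n a x (n*n) e"
proof -
  assume q: "Q n a x" and e: "e < n"
  define K where "K = n * n"
  define M where "M = Mx n a"
  show ?thesis
  proof (cases "M = 0")
    case True then show ?thesis using Vzero[OF n a x _ e] M_def by simp
  next
    case False
    then have Mp: "0 < M" using Mx0[OF n a x] M_def by simp
    have hQ: "\<And>j. K \<le> j \<Longrightarrow> \<forall>f<n. M ^ j * x f \<le> V n a x j f" using q unfolding Q_def K_def M_def by blast
    have "M ^ Suc K * V n a x K e \<le> V n a x (K + Suc K) e"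
      using F3[OF n a x _ e, of "Suc K" K] hQ[of "Suc K"] M_def by simp
    also have "K + Suc K = Suc K + n * n" unfolding K_def by simp
    also have "V n a x (Suc K + n * n) e = M ^ (n * n) * V n a x (Suc K) e"
      using Fiter[OF n a x _ e, of "Suc K" n] K_def M_def by simp
    finally have "M ^ K * (M * V n a x K e) \<le> M ^ K * V n a x (Suc K) e" unfolding K_def by (simp add: algebra_simps)
    then have i: "M * V n a x K e \<le> V n a x (Suc K) e" using Mp by (simp add: mult_le_cancel_left_pos)
    define J where "J = K + n - 1"
    have JK: "K \<le> J" unfolding J_def using n by simp
    have "M ^ J * V n a x (Suc K) e \<le> V n a x (Suc K + J) e"
      using F3[OF n a x _ e, of J "Suc K"] hQ[OF JK] M_def by simp
    also have "Suc K + J = K + (n + 1) * n" unfolding J_def K_def using n by (simp add: algebra_simps)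
    also have "V n a x (K + (n + 1) * n) e = M ^ ((n + 1) * n) * V n a x K e"
      using Fiter[OF n a x _ e, of K "n + 1"] K_def M_def by simp
    also have "(n + 1) * n = Suc J" unfolding J_def K_def using n by (simp add: algebra_simps)
    finally have "M ^ J * V n a x (Suc K) e \<le> M ^ J * (M * V n a x K e)" by (simp add: algebra_simps)
    then have ii: "V n a x (Suc K) e \<le> M * V n a x K e" using Mp by (simp add: mult_le_cancel_left_pos)
    show ?thesis using i ii K_def M_def by simp
  qed
qed

lemma Attr_Q: "\<forall>f<n. V n a x (Suc t) f = Mx n a * V n a x t f \<Longrightarrow> Q n a x"
proof -
  assume h: "\<forall>f<n. V n a x (Suc t) f = Mx n a * V n a x t f"
  define M where "M = Mx n a"
  show ?thesis
  proof (cases "M = 0")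
    case True
    show ?thesis unfolding Q_def
    proof (intro allI impI)
      fix k e assume k: "n * n \<le> k" and e: "e < n"
      then have "0 < k" using n by (metis le_0_eq mult_is_0 neq0_conv)
      moreover have "Mx n a = 0" using True M_def by simp
      ultimately show "Mx n a ^ k * x e \<le> V n a x k e" using V_nonneg[OF n a x] by (simp add: zero_power)
    qed
  next
    case False
    then have Mp: "0 < M" using Mx0[OF n a x] M_def by simp
    have P: "\<forall>e<n. V n a x (t + j) e = M ^ j * V n a x t e" for j using propj[OF n a x h] M_def by simp
    show ?thesis unfolding Q_def
    proof (intro allI impI)
      fix k e assume k: "n * n \<le> k" and e: "e < n"
      have tn: "t \<le> t * n" using n by simp
      have A1: "V n a x (k + t * n) e = M ^ (t * n) * V n a x k e" using Fiter[OF n a x k e, of t] M_def by simp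
      have A2: "V n a x (k + t * n) e = M ^ (k + (t * n - t)) * V n a x t e"
        using P[of "k + (t * n - t)"] e tn by simp
      have A3: "V n a x (t * n) e = M ^ (t * n - t) * V n a x t e"
        using P[of "t * n - t"] e tn by simp
      have A4: "M ^ (t * n) * x e \<le> V n a x (t * n) e" using F2[OF n a x e, of t] M_def by simp
      have "M ^ (t * n) * (M ^ k * x e) = M ^ k * (M ^ (t * n) * x e)" by (simp add: algebra_simps)
      also have "\<dots> \<le> M ^ k * V n a x (t * n) e" using A4 Mp by (simp add: mult_left_mono)
      also have "\<dots> = M ^ (t * n) * V n a x k e" using A1 A2 A3 by (simp add: power_add algebra_simps)
      finally show "Mx n a ^ k * x e \<le> V n a x k e" using Mp M_def by (simp add: mult_le_cancel_left_pos)
    qed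
  qed
qed

end

lemma V_scale:
  assumes n: "0 < n" and a: "\<forall>t<n. 0 \<le> a t" and b: "\<forall>t<n. 0 \<le> b t" and x: "\<forall>i<n. 0 \<le> x i"
    and c: "0 \<le> c" and ab: "\<forall>t<n. a t \<le> c * b t" and e: "e < n"
  shows "V n a x k e \<le> c ^ k * V n b x k e"
proof -
  from V2[OF n a x e, of k] show ?thesis
  proof
    assume "V n a x k e = 0" then show ?thesis using V_nonneg[OF n b x] c by simp
  next
    assume "\<exists>ds. length ds = k \<and> set ds \<subseteq> {..<n} \<and> V n a x k e = prod_list (map a ds) * x ((e + sum_list ds) mod n)"
    then obtain ds where ds: "length ds = k" "set ds \<subseteq> {..<n}" "V n a x k e = prod_list (map a ds) * x ((e + sum_list ds) mod n)" by blast
    have xx: "0 \<le> x ((e + sum_list ds) mod n)" using x n by simp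
    have "V n a x k e \<le> c ^ k * prod_list (map b ds) * x ((e + sum_list ds) mod n)"
      using prod_scale[OF a ab ds(2)] ds xx by (simp add: mult_right_mono)
    also have "\<dots> \<le> c ^ k * V n b x k e"
      using V1[OF n b x ds(1,2) e] c by (simp add: mult_left_mono mult.assoc)
    finally show ?thesis .
  qed
qed



lemma mlambda_Circ:
  assumes n: "0 < n" and a: "\<forall>t<n. 0 \<le> a t"
  shows "mlambda n (Circ n a) = Mx n a"
proof -
  define A where "A = Circ n a"
  define S where "S = {root k (\<Prod>j<k. A (\<sigma> j) (\<sigma> (Suc j))) | k \<sigma>.
      1 \<le> k \<and> k \<le> n \<and> (\<forall>j\<le>k. \<sigma> j < n) \<and> \<sigma> k = \<sigma> 0}"
  have Ale: "A i j \<le> Mx n a" for i j unfolding A_def Circ_def using Mx_ge n by simp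
  have Age: "0 \<le> A i j" for i j unfolding A_def Circ_def using a n by simp
  have M0: "0 \<le> Mx n a" using Mx_nonneg[OF n a] .
  define F where "F xs = root (length xs - 1) (\<Prod>j<length xs - 1. A (xs ! j) (xs ! Suc j))" for xs
  have fin: "finite S"
  proof (rule finite_subset)
    show "S \<subseteq> F ` {xs. set xs \<subseteq> {..<n} \<and> length xs \<le> Suc n}"
    proof
      fix y assume "y \<in> S"
      then obtain k \<sigma> where y: "y = root k (\<Prod>j<k. A (\<sigma> j) (\<sigma> (Suc j)))" and k: "1 \<le> k" "k \<le> n"
        and s: "\<forall>j\<le>k. \<sigma> j < n" unfolding S_def by blast
      define xs where "xs = map \<sigma> [0..<Suc k]"
      have len: "length xs - 1 = k" by (simp add: xs_def)
      have "(\<Prod>j<k. A (xs ! j) (xs ! Suc j)) = (\<Prod>j<k. A (\<sigma> j) (\<sigma> (Suc j)))"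
        by (rule prod.cong) (auto simp del: upt_Suc simp: xs_def nth_map_upt)
      then have "y = F xs" unfolding y F_def len by simp
      moreover have "set xs \<subseteq> {..<n} \<and> length xs \<le> Suc n" unfolding xs_def using s k by auto
      ultimately show "y \<in> F ` {xs. set xs \<subseteq> {..<n} \<and> length xs \<le> Suc n}" by blast
    qed
    show "finite (F ` {xs. set xs \<subseteq> {..<n} \<and> length xs \<le> Suc n})"
      by (intro finite_imageI finite_lists_length_le) simp
  qed
  have ub: "y \<le> Mx n a" if "y \<in> S" for y
  proof -
    from that obtain k \<sigma> where y: "y = root k (\<Prod>j<k. A (\<sigma> j) (\<sigma> (Suc j)))" and k: "1 \<le> k"
      unfolding S_def by blast
    have "(\<Prod>j<k. A (\<sigma> j) (\<sigma> (Suc j))) \<le> (\<Prod>j<k. Mx n a)"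
      by (rule prod_mono) (simp add: Ale Age)
    then have "y \<le> root k (Mx n a ^ k)" unfolding y using k by simp
    also have "\<dots> = Mx n a" using k M0 by (simp add: real_root_power_cancel)
    finally show ?thesis .
  qed
  obtain t where t: "t < n" "a t = Mx n a" using Mx_in[OF n] by blast
  define \<sigma> where "\<sigma> j = (j * t) mod n" for j
  have sig: "\<sigma> (Suc j) = (\<sigma> j + t) mod n" for j unfolding \<sigma>_def
    using mod_add_left_eq[of "j * t" n t] by (simp add: add.commute)
  have fac: "A (\<sigma> j) (\<sigma> (Suc j)) = Mx n a" for j
    unfolding sig A_def using Circ_shift[of "\<sigma> j" n t a] t n unfolding \<sigma>_def by simp
  have "root n (\<Prod>j<n. A (\<sigma> j) (\<sigma> (Suc j))) \<in> S" unfolding S_def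
    using n by (auto simp: \<sigma>_def intro!: exI[of _ n] exI[of _ \<sigma>])
  moreover have "root n (\<Prod>j<n. A (\<sigma> j) (\<sigma> (Suc j))) = Mx n a"
    using fac n M0 by (simp add: real_root_power_cancel)
  ultimately have "Mx n a \<in> S" by simp
  then have "Max S = Mx n a" using fin ub by (intro Max_eqI) auto
  then show ?thesis unfolding mlambda_def S_def A_def .
qed


lemma Q_zero: "0 < n \<Longrightarrow> \<forall>t<n. 0 \<le> b t \<Longrightarrow> \<forall>i<n. 0 \<le> x i \<Longrightarrow> Mx n b = 0 \<Longrightarrow> Q n b x"
  unfolding Q_def
proof (intro allI impI)
  fix k e assume n: "0 < n" and b: "\<forall>t<n. 0 \<le> b t" and x: "\<forall>i<n. 0 \<le> x i" and M: "Mx n b = 0"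
    and k: "n * n \<le> k" and e: "e < n"
  then have "0 < k" by (metis le_0_eq mult_is_0 neq0_conv)
  then show "Mx n b ^ k * x e \<le> V n b x k e" using M V_nonneg[OF n b x] by (simp add: zero_power)
qed

lemma Q_scale:
  assumes n: "0 < n" and a: "\<forall>t<n. 0 \<le> a t" and b: "\<forall>t<n. 0 \<le> b t" and x: "\<forall>i<n. 0 \<le> x i"
    and q: "Q n a x" and Ma: "0 < Mx n a" and ab: "\<forall>t<n. a t * Mx n b \<le> Mx n a * b t"
  shows "Q n b x"
proof (cases "Mx n b = 0")
  case True then show ?thesis using Q_zero[OF n b x] by simp
next
  case False
  then have Mb: "0 < Mx n b" using Mx_nonneg[OF n b] by simp
  define c where "c = Mx n a / Mx n b"
  have c: "0 \<le> c" unfolding c_def using Ma Mb by simp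
  have abc: "\<forall>t<n. a t \<le> c * b t"
  proof (intro allI impI)
    fix t assume t: "t < n"
    have "a t * Mx n b \<le> Mx n a * b t" using ab t by simp
    then show "a t \<le> c * b t" unfolding c_def using Mb by (simp add: field_simps)
  qed
  show ?thesis unfolding Q_def
  proof (intro allI impI)
    fix k e assume k: "n * n \<le> k" and e: "e < n"
    have "Mx n a ^ k * x e \<le> V n a x k e" using q k e unfolding Q_def by blast
    also have "\<dots> \<le> c ^ k * V n b x k e" using V_scale[OF n a b x c abc e] .
    finally have "Mx n a ^ k * x e \<le> (Mx n a ^ k / Mx n b ^ k) * V n b x k e"
      unfolding c_def by (simp add: power_divide)
    then have "Mx n b ^ k * (Mx n a ^ k * x e) \<le> Mx n a ^ k * V n b x k e"
      using Mb by (simp add: field_simps)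
    then have "Mx n a ^ k * (Mx n b ^ k * x e) \<le> Mx n a ^ k * V n b x k e" by (simp add: algebra_simps)
    then show "Mx n b ^ k * x e \<le> V n b x k e" using Ma by (simp add: mult_le_cancel_left_pos)
  qed
qed

lemma tendsto_Maxfin:
  fixes f :: "nat \<Rightarrow> nat \<Rightarrow> real"
  shows "0 < n \<Longrightarrow> (\<forall>l<n. (\<lambda>m. f m l) \<longlonglongrightarrow> g l) \<Longrightarrow>
    (\<lambda>m. Max {f m l | l. l < n}) \<longlonglongrightarrow> Max {g l | l. l < n}"
proof (induction n)
  case 0 then show ?case by simp
next
  case (Suc n)
  show ?case
  proof (cases "n = 0")
    case True
    have e: "\<And>h. {h l | l. l < Suc 0} = {h 0}" by auto
    show ?thesis using Suc True unfolding e by simp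
  next
    case False
    have e: "\<And>h :: nat \<Rightarrow> real. Max {h l | l. l < Suc n} = max (h n) (Max {h l | l. l < n})"
    proof -
      fix h :: "nat \<Rightarrow> real"
      have "{h l | l. l < Suc n} = insert (h n) (h ` {..<n})" by (auto simp: less_Suc_eq)
      moreover have "Max (insert (h n) (h ` {..<n})) = max (h n) (Max (h ` {..<n}))"
        using False by (intro Max_insert) auto
      ultimately show "Max {h l | l. l < Suc n} = max (h n) (Max {h l | l. l < n})"
        unfolding Max_set_eq by simp
    qed
    show ?thesis unfolding e
      by (intro tendsto_max) (use Suc False in auto)
  qed
qed

lemma tendsto_mpow:
  assumes n: "0 < n" and conv: "\<forall>t<n. (\<lambda>m. a m t) \<longlonglongrightarrow> b t"
  shows "(\<lambda>m. mpow n (Circ n (a m)) k i j) \<longlonglongrightarrow> mpow n (Circ n b) k i j"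
proof (induction k arbitrary: i j)
  case 0 then show ?case by simp
next
  case (Suc k)
  have C: "(\<lambda>m. Circ n (a m) i l) \<longlonglongrightarrow> Circ n b i l" for l
    unfolding Circ_def using conv n by simp
  show ?case unfolding mpow.simps mmult_def
    by (rule tendsto_Maxfin[OF n]) (auto intro!: tendsto_mult C Suc.IH)
qed

lemma tendsto_V:
  assumes n: "0 < n" and conv: "\<forall>t<n. (\<lambda>m. a m t) \<longlonglongrightarrow> b t"
  shows "(\<lambda>m. V n (a m) x k e) \<longlonglongrightarrow> V n b x k e"
  unfolding V_def mvec_def
  by (rule tendsto_Maxfin[OF n]) (auto intro!: tendsto_mult tendsto_mpow[OF n conv])

lemma tendsto_Mx:
  assumes n: "0 < n" and conv: "\<forall>t<n. (\<lambda>m. a m t) \<longlonglongrightarrow> b t"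
  shows "(\<lambda>m. Mx n (a m)) \<longlonglongrightarrow> Mx n b"
  unfolding Mx_def by (rule tendsto_Maxfin[OF n conv])



lemma ivl_bounds: "v \<in> ivl k l u \<Longrightarrow> l \<le> v \<and> v \<le> u"
  by (cases k) auto

lemma approx_in:
  assumes val: "valid_ivl k l u" and v: "v = l \<or> v = u"
  shows "v + ((l + u) / 2 - v) * inverse (real (Suc (Suc m))) \<in> ivl k l u"
proof -
  define w where "w = inverse (real (Suc (Suc m)))"
  have w0: "0 < w" unfolding w_def by simp
  have w1: "w \<le> 1 / 2" unfolding w_def by (simp add: field_simps)
  have lu: "l \<le> u" "ivl k l u \<noteq> {}" using val unfolding valid_ivl_def by auto
  show ?thesis
  proof (cases "l = u")
    case True
    then have "v + ((l + u) / 2 - v) * w = l" using v by auto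
    moreover have "k = Closed" using lu True by (cases k) auto
    ultimately show ?thesis using True unfolding w_def by simp
  next
    case False
    then have luf: "l < u" using lu by simp
    define X where "X = (u - l) / 2 * w"
    have p: "0 < X" unfolding X_def using luf w0 by simp
    have q0: "(u - l) / 2 * w \<le> (u - l) / 2 * (1 / 2)" using w1 luf by (intro mult_left_mono) auto
    have q: "4 * X \<le> u - l" using q0 unfolding X_def by simp
    have "l < v + ((l + u) / 2 - v) * w \<and> v + ((l + u) / 2 - v) * w < u"
    proof (cases "v = l")
      case True
      have eq: "v + ((l + u) / 2 - v) * w = l + X" unfolding X_def using True by (simp add: algebra_simps)
      show ?thesis unfolding eq using p q luf by (intro conjI) linarith+
    next
      case False
      then have vu: "v = u" using v by simp
      have eq: "v + ((l + u) / 2 - v) * w = u - X" unfolding X_def using vu by (simp add: field_simps)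
      show ?thesis unfolding eq using p q luf by (intro conjI) linarith+
    qed
    then show ?thesis unfolding w_def[symmetric] by (cases k) auto
  qed
qed

lemma conv_inv: "(\<lambda>m. c * inverse (real (Suc (Suc m)))) \<longlonglongrightarrow> (0::real)"
proof -
  have "(\<lambda>m. inverse (real (Suc (Suc m)))) \<longlonglongrightarrow> 0"
    using LIMSEQ_Suc[OF LIMSEQ_inverse_real_of_nat] .
  then show ?thesis using tendsto_mult[OF tendsto_const, of _ 0 sequentially c] by simp
qed

lemma Attr_Circ_iff:
  assumes n: "0 < n" and a: "\<forall>t<n. 0 \<le> a t" and x: "\<forall>i<n. 0 \<le> x i"
  shows "x \<in> Attr n (Circ n a) \<longleftrightarrow> Q n a x"
proof
  assume "x \<in> Attr n (Circ n a)"
  then obtain t where "veq n (mvec n (mpow n (Circ n a) (Suc t)) x) (\<lambda>i. mlambda n (Circ n a) * mvec n (mpow n (Circ n a) t) x i)"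
    unfolding Attr_def by blast
  then have "\<forall>f<n. V n a x (Suc t) f = Mx n a * V n a x t f"
    unfolding veq_def V_def mlambda_Circ[OF n a] by simp
  then show "Q n a x" using Attr_Q[OF n a x] by blast
next
  assume "Q n a x"
  then have "\<forall>f<n. V n a x (Suc (n*n)) f = Mx n a * V n a x (n*n) f" using Q_cond[OF n a x] by blast
  then show "x \<in> Attr n (Circ n a)"
    unfolding Attr_def veq_def V_def mlambda_Circ[OF n a] using x by blast
qed

lemma cond_Circ_iff:
  assumes n: "0 < n" and a: "\<forall>t<n. 0 \<le> a t" and x: "\<forall>i<n. 0 \<le> x i"
  shows "veq n (\<lambda>r. mlambda n (Circ n a) * mvec n (mpow n (Circ n a) (n^2)) x r)
                (mvec n (mpow n (Circ n a) (n^2 + 1)) x) \<longleftrightarrow> Q n a x"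
proof
  assume "veq n (\<lambda>r. mlambda n (Circ n a) * mvec n (mpow n (Circ n a) (n^2)) x r)
                (mvec n (mpow n (Circ n a) (n^2 + 1)) x)"
  then have "\<forall>f<n. V n a x (Suc (n*n)) f = Mx n a * V n a x (n*n) f"
    unfolding veq_def V_def mlambda_Circ[OF n a] by (simp add: power2_eq_square)
  then show "Q n a x" using Attr_Q[OF n a x] by blast
next
  assume "Q n a x"
  then have "\<forall>f<n. V n a x (Suc (n*n)) f = Mx n a * V n a x (n*n) f" using Q_cond[OF n a x] by blast
  then show "veq n (\<lambda>r. mlambda n (Circ n a) * mvec n (mpow n (Circ n a) (n^2)) x r)
                (mvec n (mpow n (Circ n a) (n^2 + 1)) x)"
    unfolding veq_def V_def mlambda_Circ[OF n a] by (simp add: power2_eq_square)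
qed



lemma IC_elim: "A \<in> IC n ka la ua \<Longrightarrow> \<exists>a. A = Circ n a \<and> (\<forall>t<n. a t \<in> ivl (ka t) (la t) (ua t))"
  unfolding IC_def by blast

theorem mainTheorem20:
  fixes n :: nat
    and ka kx :: "nat \<Rightarrow> ikind"
    and la ua lx ux :: "nat \<Rightarrow> real"
  assumes n: "1 \<le> n"
    and a_ok: "\<forall>t<n. valid_ivl (ka t) (la t) (ua t)"
    and x_ok: "\<forall>i<n. valid_ivl (kx i) (lx i) (ux i)"
  shows
    "((\<exists>x\<in>ivec n kx lx ux. \<forall>A\<in>IC n ka la ua. x \<in> Attr n A)
       \<longleftrightarrow>
      (\<exists>x\<in>ivec n kx lx ux. \<forall>i<n. \<not> mzero n (Ak n la ua i) \<longrightarrow>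
          veq n (\<lambda>r. mlambda n (Ak n la ua i) * mvec n (mpow n (Ak n la ua i) (n^2)) x r)
                (mvec n (mpow n (Ak n la ua i) (n^2 + 1)) x)))
     \<and>
     (Ahat n la ua \<in> IC n ka la ua \<longrightarrow>
       ((\<forall>x\<in>ivec n kx lx ux. \<exists>A\<in>IC n ka la ua. x \<in> Attr n A)
         \<longleftrightarrow>
        (\<exists>A\<in>IC n ka la ua. \<forall>x\<in>ivec n kx lx ux. x \<in> Attr n A)))"
proof -
  have n0: "0 < n" using n by simp
  have lu: "\<forall>t<n. 0 \<le> la t \<and> la t \<le> ua t" using a_ok unfolding valid_ivl_def by blast
  have xnn: "\<forall>i<n. 0 \<le> x i" if "x \<in> ivec n kx lx ux" for x
  proof (intro allI impI)
    fix i assume i: "i < n"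
    have "x i \<in> ivl (kx i) (lx i) (ux i)" using that i unfolding ivec_def by blast
    then have "lx i \<le> x i" using ivl_bounds by blast
    moreover have "0 \<le> lx i" using x_ok i unfolding valid_ivl_def by blast
    ultimately show "0 \<le> x i" by simp
  qed
  have inn: "\<forall>t<n. 0 \<le> a t" if "\<forall>t<n. a t \<in> ivl (ka t) (la t) (ua t)" for a
    using that lu ivl_bounds by (meson order_trans)
  define bi where "bi i = (\<lambda>t. if t = i then ua t else la t)" for i
  have Akb: "Ak n la ua i = Circ n (bi i)" for i unfolding Ak_def bi_def ..
  have bnn: "\<forall>t<n. 0 \<le> bi i t" for i unfolding bi_def using lu by auto
  have a1: "\<forall>i<n. \<not> mzero n (Ak n la ua i) \<longrightarrow>
          veq n (\<lambda>r. mlambda n (Ak n la ua i) * mvec n (mpow n (Ak n la ua i) (n^2)) x r)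
                (mvec n (mpow n (Ak n la ua i) (n^2 + 1)) x)"
    if xX: "x \<in> ivec n kx lx ux" and H: "\<forall>A\<in>IC n ka la ua. x \<in> Attr n A" for x
  proof (intro allI impI)
    fix i assume i: "i < n"
    have x: "\<forall>i<n. 0 \<le> x i" using xnn[OF xX] .
    define am where "am m t = bi i t + ((la t + ua t) / 2 - bi i t) * inverse (real (Suc (Suc m)))" for m t
    have memb: "\<forall>t<n. am m t \<in> ivl (ka t) (la t) (ua t)" for m
    proof (intro allI impI)
      fix t assume t: "t < n"
      have "bi i t = la t \<or> bi i t = ua t" by (simp add: bi_def)
      then show "am m t \<in> ivl (ka t) (la t) (ua t)" unfolding am_def using approx_in[OF a_ok[rule_format, OF t]] by blast
    qed
    have conv: "\<forall>t<n. (\<lambda>m. am m t) \<longlonglongrightarrow> bi i t"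
    proof (intro allI impI)
      fix t assume "t < n"
      show "(\<lambda>m. am m t) \<longlonglongrightarrow> bi i t"
        unfolding am_def using tendsto_add[OF tendsto_const[of "bi i t"] conv_inv[of "(la t + ua t) / 2 - bi i t"]]
        by simp
    qed
    have Qm: "Q n (am m) x" for m
    proof -
      have "Circ n (am m) \<in> IC n ka la ua" unfolding IC_def using memb[of m] by blast
      then have "x \<in> Attr n (Circ n (am m))" using H by blast
      then show ?thesis using Attr_Circ_iff[OF n0 inn[OF memb[of m]] x] by simp
    qed
    have "Q n (bi i) x" unfolding Q_def
    proof (intro allI impI)
      fix k e assume k: "n * n \<le> k" and e: "e < n"
      show "Mx n (bi i) ^ k * x e \<le> V n (bi i) x k e"
      proof (rule LIMSEQ_le)
        show "(\<lambda>m. Mx n (am m) ^ k * x e) \<longlonglongrightarrow> Mx n (bi i) ^ k * x e"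
          by (intro tendsto_mult tendsto_power tendsto_const tendsto_Mx[OF n0 conv])
        show "(\<lambda>m. V n (am m) x k e) \<longlonglongrightarrow> V n (bi i) x k e"
          by (rule tendsto_V[OF n0 conv])
        show "\<exists>N. \<forall>m\<ge>N. Mx n (am m) ^ k * x e \<le> V n (am m) x k e"
          using Qm k e unfolding Q_def by blast
      qed
    qed
    then show "veq n (\<lambda>r. mlambda n (Ak n la ua i) * mvec n (mpow n (Ak n la ua i) (n^2)) x r)
                (mvec n (mpow n (Ak n la ua i) (n^2 + 1)) x)"
      unfolding Akb using cond_Circ_iff[OF n0 bnn x] by simp
  qed
  have a2: "\<forall>A\<in>IC n ka la ua. x \<in> Attr n A"
    if xX: "x \<in> ivec n kx lx ux" and H: "\<forall>i<n. \<not> mzero n (Ak n la ua i) \<longrightarrow>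
          veq n (\<lambda>r. mlambda n (Ak n la ua i) * mvec n (mpow n (Ak n la ua i) (n^2)) x r)
                (mvec n (mpow n (Ak n la ua i) (n^2 + 1)) x)" for x
  proof
    fix A assume "A \<in> IC n ka la ua"
    then obtain a where A: "A = Circ n a" and am: "\<forall>t<n. a t \<in> ivl (ka t) (la t) (ua t)"
      using IC_elim by blast
    have x: "\<forall>i<n. 0 \<le> x i" using xnn[OF xX] .
    have a: "\<forall>t<n. 0 \<le> a t" using inn[OF am] .
    have "Q n a x"
    proof (cases "Mx n a = 0")
      case True then show ?thesis using Q_zero[OF n0 a x] by simp
    next
      case False
      then have Ma: "0 < Mx n a" using Mx_nonneg[OF n0 a] by simp
      obtain i where i: "i < n" "a i = Mx n a" using Mx_in[OF n0] by blast
      have aub: "\<forall>t<n. la t \<le> a t \<and> a t \<le> ua t" using am ivl_bounds by blast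
      have bii: "bi i i = ua i" unfolding bi_def by simp
      have uai: "Mx n a \<le> ua i" using aub i by auto
      have Mb: "ua i \<le> Mx n (bi i)" using Mx_ge[OF i(1), of "bi i"] bii by simp
      have "Circ n (bi i) 0 i = ua i" unfolding Circ_def using i bii by simp
      then have nz: "\<not> mzero n (Ak n la ua i)" unfolding mzero_def Akb using n0 i Ma uai by force
      have qb: "Q n (bi i) x" using H[rule_format, OF i(1) nz] unfolding Akb using cond_Circ_iff[OF n0 bnn x] by simp
      have sc: "\<forall>t<n. bi i t * Mx n a \<le> Mx n (bi i) * a t"
      proof (intro allI impI)
        fix t assume t: "t < n"
        show "bi i t * Mx n a \<le> Mx n (bi i) * a t"
        proof (cases "t = i")
          case True
          have "ua i * Mx n a \<le> Mx n (bi i) * Mx n a" using Mb Ma by (simp add: mult_right_mono)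
          then show ?thesis using True bii i by (simp add: mult.commute)
        next
          case False
          then have "bi i t = la t" unfolding bi_def by simp
          moreover have "la t * Mx n a \<le> a t * Mx n (bi i)"
            using aub t lu uai Mb Ma a by (intro mult_mono) auto
          ultimately show ?thesis by (simp add: mult.commute)
        qed
      qed
      show ?thesis using Q_scale[OF n0 bnn a x qb _ sc] Mb uai Ma by simp
    qed
    then show "x \<in> Attr n A" unfolding A using Attr_Circ_iff[OF n0 a x] by simp
  qed
  have partA: "(\<exists>x\<in>ivec n kx lx ux. \<forall>A\<in>IC n ka la ua. x \<in> Attr n A)
       \<longleftrightarrow>
      (\<exists>x\<in>ivec n kx lx ux. \<forall>i<n. \<not> mzero n (Ak n la ua i) \<longrightarrow>
          veq n (\<lambda>r. mlambda n (Ak n la ua i) * mvec n (mpow n (Ak n la ua i) (n^2)) x r)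
                (mvec n (mpow n (Ak n la ua i) (n^2 + 1)) x))"
    using a1 a2 by blast
  have partB: "(\<forall>x\<in>ivec n kx lx ux. \<exists>A\<in>IC n ka la ua. x \<in> Attr n A)
         \<longleftrightarrow> (\<exists>A\<in>IC n ka la ua. \<forall>x\<in>ivec n kx lx ux. x \<in> Attr n A)"
    if hat: "Ahat n la ua \<in> IC n ka la ua"
  proof
    assume tol: "\<forall>x\<in>ivec n kx lx ux. \<exists>A\<in>IC n ka la ua. x \<in> Attr n A"
    define L where "L = Max {la s | s. s < n}"
    define h where "h t = min L (ua t)" for t
    have Ah: "Ahat n la ua = Circ n h" unfolding Ahat_def h_def L_def ..
    obtain a' where a': "Ahat n la ua = Circ n a'" "\<forall>t<n. a' t \<in> ivl (ka t) (la t) (ua t)"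
      using IC_elim[OF hat] by blast
    have ha: "h t = a' t" if "t < n" for t
    proof -
      have "Circ n h 0 t = Circ n a' 0 t" using Ah a'(1) by simp
      then show ?thesis unfolding Circ_def using that by simp
    qed
    have hl: "\<forall>t<n. la t \<le> h t" using a'(2) ha ivl_bounds by metis
    obtain s where s: "s < n" "la s = L" using Max_fin_in[OF n0, of la] L_def by metis
    have L0: "0 \<le> L" using s lu by metis
    have hnn: "\<forall>t<n. 0 \<le> h t" unfolding h_def using L0 lu by auto
    have hL: "\<forall>t<n. h t \<le> L" unfolding h_def by simp
    have MhL: "Mx n h = L"
    proof (rule antisym)
      show "Mx n h \<le> L" unfolding Mx_def using hL n0 by (intro Max_fin_le) auto
      have "L \<le> h s" using hl s by metis
      also have "\<dots> \<le> Mx n h" using Mx_ge[OF s(1)] .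
      finally show "L \<le> Mx n h" .
    qed
    have "\<forall>x\<in>ivec n kx lx ux. x \<in> Attr n (Ahat n la ua)"
    proof
      fix x assume xX: "x \<in> ivec n kx lx ux"
      have x: "\<forall>i<n. 0 \<le> x i" using xnn[OF xX] .
      obtain A where "A \<in> IC n ka la ua" "x \<in> Attr n A" using tol xX by blast
      then obtain a where A: "A = Circ n a" and am: "\<forall>t<n. a t \<in> ivl (ka t) (la t) (ua t)"
        and xa: "x \<in> Attr n (Circ n a)" using IC_elim by blast
      have a: "\<forall>t<n. 0 \<le> a t" using inn[OF am] .
      have qa: "Q n a x" using xa Attr_Circ_iff[OF n0 a x] by simp
      have aub: "\<forall>t<n. la t \<le> a t \<and> a t \<le> ua t" using am ivl_bounds by blast
      have "Q n h x"
      proof (cases "L = 0")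
        case True then show ?thesis using Q_zero[OF n0 hnn x] MhL by simp
      next
        case False
        then have Lp: "0 < L" using L0 by simp
        have LMa: "L \<le> Mx n a" using Mx_ge[OF s(1), of a] aub s by fastforce
        then have Ma: "0 < Mx n a" using Lp by simp
        have sc: "\<forall>t<n. a t * Mx n h \<le> Mx n a * h t"
        proof (intro allI impI)
          fix t assume t: "t < n"
          show "a t * Mx n h \<le> Mx n a * h t"
          proof (cases "L \<le> ua t")
            case True
            then have "h t = L" unfolding h_def by simp
            then show ?thesis using MhL Mx_ge[OF t, of a] Lp by (simp add: mult.commute mult_right_mono)
          next
            case False
            then have "h t = ua t" unfolding h_def by simp
            moreover have "a t * L \<le> ua t * Mx n a" using aub t a LMa Lp lu by (intro mult_mono) auto
            ultimately show ?thesis using MhL by (simp add: mult.commute)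
          qed
        qed
        show ?thesis using Q_scale[OF n0 a hnn x qa Ma sc] .
      qed
      then show "x \<in> Attr n (Ahat n la ua)" unfolding Ah using Attr_Circ_iff[OF n0 hnn x] by simp
    qed
    then show "\<exists>A\<in>IC n ka la ua. \<forall>x\<in>ivec n kx lx ux. x \<in> Attr n A" using hat by blast
  next
    assume "\<exists>A\<in>IC n ka la ua. \<forall>x\<in>ivec n kx lx ux. x \<in> Attr n A"
    then show "\<forall>x\<in>ivec n kx lx ux. \<exists>A\<in>IC n ka la ua. x \<in> Attr n A" by blast
  qed
  show ?thesis using partA partB by blast
qed


end
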